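(* Let $(X_n)_{n\ge1}$ be a sequence of non-negative real random variables which is stochastically superadditive, i.e. for all integers $n,m\ge1$, $X_{n+m}$ stochastically dominates $X_n+X'_m$ where $X'_m$ is a copy of $X_m$ independent of $X_n$. Let $\rho_\star=\sup_{n\ge1}\mathbb{E}X_n/n\in[0,\infty]$. Then $X_n/n\to\rho_\star$ in probability as $n\to\infty$. Moreover, for every $\rho<\rho_\star$ there exists $c>0$ such that for all $n$ large enough, $\mathbb{P}(X_n/n\le\rho)\le e^{-cn}$. *)

theory Defs
  imports "HOL-Probability.Probability"
begin

definition stoch_dominates :: "real measure \<Rightarrow> real measure \<Rightarrow> bool" where
  "stoch_dominates P Q \<longleftrightarrow> (\<forall>t::real. measure Q {t<..} \<le> measure P {t<..})"

text \<open>Stochastic superadditivity of a sequence (X n), n \<ge> 1: the law of X (n+m)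
  dominates the law of X n + X' m with X' m an independent copy of X m, i.e.
  the convolution of the two laws.\<close>
definition stoch_superadditive :: "'a measure \<Rightarrow> (nat \<Rightarrow> 'a \<Rightarrow> real) \<Rightarrow> bool" where
  "stoch_superadditive M X \<longleftrightarrow>
     (\<forall>n m. 1 \<le> n \<longrightarrow> 1 \<le> m \<longrightarrow>
        stoch_dominates (distr M borel (X (n + m)))
                        (distr M borel (X n) \<star> distr M borel (X m)))"

definition rho_star :: "'a measure \<Rightarrow> (nat \<Rightarrow> 'a \<Rightarrow> real) \<Rightarrow> ennreal" where
  "rho_star M X = (SUP n\<in>{1..}. (\<integral>\<^sup>+ \<omega>. ennreal (X n \<omega>) \<partial>M) / of_nat n)"

end

theory Submission
  imports Defs "HOL-Real_Asymp.Real_Asymp"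
begin


lemma exp_integral_rep:
  fixes l x :: real assumes "l > 0"
  shows "ennreal (exp (- l * x)) = (\<integral>\<^sup>+s. ennreal (l * exp (- l * s)) * indicator {x ..} s \<partial>lborel)"
proof -
  have "(\<integral>\<^sup>+s. ennreal (l * exp (- l * s)) * indicator {x ..} s \<partial>lborel) = ennreal (0 - (- exp (- l * x)))"
  proof (rule nn_integral_FTC_atLeast)
    show "(\<lambda>s. l * exp (- l * s)) \<in> borel_measurable borel" by measurable
    fix s show "DERIV (\<lambda>s. - exp (- l * s)) s :> l * exp (- l * s)"
      by (auto intro!: derivative_eq_intros)
    show "0 \<le> l * exp (- l * s)" using assms by simp
  next
    have "((\<lambda>s. exp (- l * s)) \<longlongrightarrow> 0) at_top"
      using assms by real_asymp
    then show "((\<lambda>s. - exp (- l * s)) \<longlongrightarrow> 0) at_top"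
      using tendsto_minus by fastforce
  qed
  then show ?thesis by simp
qed



lemma dom_laplace:
  fixes P Q :: "real measure" and l :: real
  assumes P: "prob_space P" and Q: "prob_space Q"
    and sP: "sets P = sets borel" and sQ: "sets Q = sets borel"
    and d: "stoch_dominates P Q" and l: "l > 0"
  shows "(\<integral>\<^sup>+x. ennreal (exp (- l * x)) \<partial>P) \<le> (\<integral>\<^sup>+x. ennreal (exp (- l * x)) \<partial>Q)"
proof -
  have key: "(\<integral>\<^sup>+x. ennreal (exp (- l * x)) \<partial>R) =
     (\<integral>\<^sup>+s. ennreal (l * exp (- l * s)) * emeasure R {..s} \<partial>lborel)"
    if R: "prob_space R" and sR: "sets R = sets borel" for R :: "real measure"
  proof -
    interpret R: prob_space R by fact
    interpret pair_sigma_finite R lborel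
      by (intro pair_sigma_finite.intro R.sigma_finite_measure_axioms lborel.sigma_finite_measure_axioms)
    have "(\<integral>\<^sup>+x. ennreal (exp (- l * x)) \<partial>R) =
       (\<integral>\<^sup>+x. (\<integral>\<^sup>+s. ennreal (l * exp (- l * s)) * indicator {x ..} s \<partial>lborel) \<partial>R)"
      using exp_integral_rep[OF l] by simp
    also have "\<dots> = (\<integral>\<^sup>+s. (\<integral>\<^sup>+x. ennreal (l * exp (- l * s)) * indicator {x ..} s \<partial>R) \<partial>lborel)"
    proof (rule Fubini'[symmetric])
      have "(\<lambda>(x,s). ennreal (l * exp (- l * s)) * indicator {x ..} s) = 
            (\<lambda>(x,s). ennreal (l * exp (- l * s)) * indicator {0..} (s - x))"
        by (auto simp: indicator_def fun_eq_iff)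
      moreover have "(\<lambda>(x,s). ennreal (l * exp (- l * s)) * indicator {0::real..} (s - x)) \<in> borel_measurable (R \<Otimes>\<^sub>M lborel)"
        using sR[measurable_cong] by measurable
      ultimately show "(\<lambda>(x,s). ennreal (l * exp (- l * s)) * indicator {x ..} s) \<in> borel_measurable (R \<Otimes>\<^sub>M lborel)"
        by (simp add: case_prod_beta')
    qed
    also have "\<dots> = (\<integral>\<^sup>+s. ennreal (l * exp (- l * s)) * emeasure R {..s} \<partial>lborel)"
    proof (rule nn_integral_cong)
      fix s :: real
      have "(\<integral>\<^sup>+x. ennreal (l * exp (- l * s)) * indicator {x ..} s \<partial>R) =
            (\<integral>\<^sup>+x. ennreal (l * exp (- l * s)) * indicator {..s} x \<partial>R)"
        by (auto intro!: nn_integral_cong simp: indicator_def)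
      also have "\<dots> = ennreal (l * exp (- l * s)) * emeasure R {..s}"
        by (subst nn_integral_cmult_indicator) (auto simp: sR)
      finally show "(\<integral>\<^sup>+x. ennreal (l * exp (- l * s)) * indicator {x ..} s \<partial>R) = ennreal (l * exp (- l * s)) * emeasure R {..s}" .
    qed
    finally show ?thesis .
  qed
  have le: "emeasure P {..s} \<le> emeasure Q {..s}" for s :: real
  proof -
    interpret P: prob_space P by fact
    interpret Q: prob_space Q by fact
    have spP: "space P = UNIV" using sets_eq_imp_space_eq[OF sP] by simp
    have spQ: "space Q = UNIV" using sets_eq_imp_space_eq[OF sQ] by simp
    have "measure P {..s} = 1 - measure P {s<..}"
      using P.prob_compl[of "{s<..}"] sP spP by (auto simp: Compl_eq_Diff_UNIV[symmetric] not_less)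
    moreover have "measure Q {..s} = 1 - measure Q {s<..}"
      using Q.prob_compl[of "{s<..}"] sQ spQ by (auto simp: Compl_eq_Diff_UNIV[symmetric] not_less)
    moreover have "measure Q {s<..} \<le> measure P {s<..}" using d by (simp add: stoch_dominates_def)
    ultimately have "measure P {..s} \<le> measure Q {..s}" by simp
    then show ?thesis by (simp add: P.emeasure_eq_measure Q.emeasure_eq_measure)
  qed
  show ?thesis
    unfolding key[OF P sP] key[OF Q sQ]
    by (intro nn_integral_mono mult_left_mono le) auto
qed



lemma submult:
  fixes M :: "'a measure" and X :: "nat \<Rightarrow> 'a \<Rightarrow> real"
  assumes M: "prob_space M" and meas: "\<And>n. 1 \<le> n \<Longrightarrow> X n \<in> borel_measurable M"
    and ss: "stoch_superadditive M X" and n: "1 \<le> n" and m: "1 \<le> m" and l: "l > 0"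
  shows "(\<integral>\<^sup>+\<omega>. ennreal (exp (- l * X (n+m) \<omega>)) \<partial>M)
       \<le> (\<integral>\<^sup>+\<omega>. ennreal (exp (- l * X n \<omega>)) \<partial>M) * (\<integral>\<^sup>+\<omega>. ennreal (exp (- l * X m \<omega>)) \<partial>M)"
proof -
  interpret prob_space M by fact
  define \<mu> where "\<mu> j = distr M borel (X j)" for j
  have pj: "prob_space (\<mu> j)" if "1 \<le> j" for j
    unfolding \<mu>_def by (rule prob_space_distr) (use meas that in auto)
  have sj[simp, measurable_cong]: "sets (\<mu> j) = sets borel" for j by (simp add: \<mu>_def)
  have int: "(\<integral>\<^sup>+\<omega>. ennreal (exp (- l * X j \<omega>)) \<partial>M) = (\<integral>\<^sup>+x. ennreal (exp (- l * x)) \<partial>\<mu> j)"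
    if "1 \<le> j" for j
    unfolding \<mu>_def by (subst nn_integral_distr) (use meas that in auto)
  have pc: "prob_space (\<mu> n \<star> \<mu> m)"
    unfolding convolution_def
    by (intro prob_space.prob_space_distr prob_space_pair pj n m) measurable
  have "(\<integral>\<^sup>+x. ennreal (exp (- l * x)) \<partial>\<mu> (n+m)) \<le> (\<integral>\<^sup>+x. ennreal (exp (- l * x)) \<partial>(\<mu> n \<star> \<mu> m))"
    apply (rule dom_laplace[OF pj pc])
    using n m ss l by (auto simp: stoch_superadditive_def \<mu>_def)
  also have "\<dots> = (\<integral>\<^sup>+x. \<integral>\<^sup>+y. ennreal (exp (- l * (x + y))) \<partial>\<mu> m \<partial>\<mu> n)"
    by (rule nn_integral_convolution) (auto intro: prob_space.axioms(1) pj n m)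
  also have "\<dots> = (\<integral>\<^sup>+x. ennreal (exp (- l * x)) * (\<integral>\<^sup>+y. ennreal (exp (- l * y)) \<partial>\<mu> m) \<partial>\<mu> n)"
  proof (intro nn_integral_cong)
    fix x
    have "(\<integral>\<^sup>+y. ennreal (exp (- l * (x + y))) \<partial>\<mu> m) = (\<integral>\<^sup>+y. ennreal (exp (- l * x)) * ennreal (exp (- l * y)) \<partial>\<mu> m)"
      by (intro nn_integral_cong) (simp add: distrib_left exp_add[symmetric] ennreal_mult[symmetric])
    then show "(\<integral>\<^sup>+y. ennreal (exp (- l * (x + y))) \<partial>\<mu> m) = ennreal (exp (- l * x)) * (\<integral>\<^sup>+y. ennreal (exp (- l * y)) \<partial>\<mu> m)"
      by (simp add: nn_integral_cmult)
  qed
  also have "\<dots> = (\<integral>\<^sup>+x. ennreal (exp (- l * x)) \<partial>\<mu> n) * (\<integral>\<^sup>+y. ennreal (exp (- l * y)) \<partial>\<mu> m)"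
    by (rule nn_integral_multc) auto
  finally show ?thesis using int n m by (simp add: int)
qed



lemma exp_neg_le_quad:
  fixes z :: real assumes "-1 \<le> z" shows "exp (- z) \<le> 1 - z + z^2"
proof (cases "z \<le> 0")
  case True
  then show ?thesis using exp_bound[of "-z"] assms by simp
next
  case False
  have e: "1 + z \<le> exp z" by simp
  have "exp (- z) = 1 / exp z" by (simp add: exp_minus field_simps)
  also have "\<dots> \<le> 1 / (1 + z)" using False e by (intro divide_left_mono) auto
  also have "\<dots> \<le> 1 - z + z^2"
  proof -
    have "1 \<le> (1 - z + z^2) * (1 + z)" using False by (simp add: algebra_simps power2_eq_square power3_eq_cube)
    then show ?thesis using False by (simp add: divide_le_eq)
  qed
  finally show ?thesis .
qed

lemma SUP_min_nat: "(SUP i::nat. ennreal (min x (real i))) = ennreal x"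
proof (rule antisym)
  show "(SUP i::nat. ennreal (min x (real i))) \<le> ennreal x"
    by (rule SUP_least) (simp add: ennreal_leI)
  have "ennreal (min x (real (nat \<lceil>x\<rceil>))) = ennreal x"
    by (simp add: min_def) linarith
  then show "ennreal x \<le> (SUP i::nat. ennreal (min x (real i)))"
    by (metis UNIV_I SUP_upper)
qed

lemma exists_good_lambda:
  fixes M :: "'a measure" and X :: "nat \<Rightarrow> 'a \<Rightarrow> real"
  assumes M: "prob_space M" and meas: "\<And>n. 1 \<le> n \<Longrightarrow> X n \<in> borel_measurable M"
    and nn: "\<And>n \<omega>. 1 \<le> n \<Longrightarrow> \<omega> \<in> space M \<Longrightarrow> 0 \<le> X n \<omega>"
    and rho: "0 \<le> \<rho>" "ennreal \<rho> < rho_star M X"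
  shows "\<exists>k\<ge>1. \<exists>l>0. \<exists>q. 0 < q \<and> q < 1 \<and>
     ennreal (exp (l * \<rho> * real k)) * (\<integral>\<^sup>+\<omega>. ennreal (exp (- l * X k \<omega>)) \<partial>M) \<le> ennreal q"
proof -
  interpret prob_space M by fact
  obtain k where k: "1 \<le> k" and lt: "ennreal \<rho> < (\<integral>\<^sup>+ \<omega>. ennreal (X k \<omega>) \<partial>M) / of_nat k"
    using rho(2) unfolding rho_star_def less_SUP_iff by auto
  define a where "a = \<rho> * real k"
  have a0: "0 \<le> a" using rho by (simp add: a_def)
  have altI: "ennreal a < (\<integral>\<^sup>+ \<omega>. ennreal (X k \<omega>) \<partial>M)"
  proof (rule ccontr)
    assume "\<not> ?thesis"
    then have "(\<integral>\<^sup>+ \<omega>. ennreal (X k \<omega>) \<partial>M) / of_nat k \<le> ennreal a / of_nat k"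
      by (intro divide_right_mono_ennreal) simp
    also have "\<dots> = ennreal \<rho>" using k a0
      by (simp add: a_def ennreal_of_nat_eq_real_of_nat divide_ennreal)
    finally show False using lt by simp
  qed
  have "(\<integral>\<^sup>+ \<omega>. ennreal (X k \<omega>) \<partial>M) = (\<integral>\<^sup>+ \<omega>. (SUP i::nat. ennreal (min (X k \<omega>) (real i))) \<partial>M)"
    by (simp add: SUP_min_nat)
  also have "\<dots> = (SUP i::nat. \<integral>\<^sup>+ \<omega>. ennreal (min (X k \<omega>) (real i)) \<partial>M)"
    by (rule nn_integral_monotone_convergence_SUP)
       (use meas k in \<open>auto intro!: incseq_SucI le_funI ennreal_leI\<close>)
  finally obtain i where i: "ennreal a < (\<integral>\<^sup>+ \<omega>. ennreal (min (X k \<omega>) (real i)) \<partial>M)"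
    using altI by (auto simp: less_SUP_iff)
  define K where "K = real i + a + 1"
  define Y where "Y \<omega> = min (X k \<omega>) K" for \<omega>
  have Kpos: "1 \<le> K" "a < K" using a0 by (auto simp: K_def)
  have Ymeas[measurable]: "Y \<in> borel_measurable M" unfolding Y_def using meas[OF k] by measurable
  have Ybd: "0 \<le> Y \<omega> \<and> Y \<omega> \<le> K \<and> Y \<omega> \<le> X k \<omega>" if "\<omega> \<in> space M" for \<omega>
    using nn[OF k that] Kpos by (auto simp: Y_def)
  have Yint: "integrable M Y"
    by (rule integrable_const_bound[where B=K]) (use Ybd Kpos in auto)
  define b where "b = expectation Y"
  have "(\<integral>\<^sup>+ \<omega>. ennreal (min (X k \<omega>) (real i)) \<partial>M) \<le> (\<integral>\<^sup>+ \<omega>. ennreal (Y \<omega>) \<partial>M)"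
    using a0 by (intro nn_integral_mono ennreal_leI) (auto simp: Y_def K_def min_def)
  also have "\<dots> = ennreal b"
    unfolding b_def by (rule nn_integral_eq_integral[OF Yint]) (use Ybd in auto)
  finally have ib: "(\<integral>\<^sup>+ \<omega>. ennreal (min (X k \<omega>) (real i)) \<partial>M) \<le> ennreal b" .
  have "ennreal a < ennreal b" using order.strict_trans2[OF i ib] .
  then have ab: "a < b" using a0 ennreal_less_iff by (metis ennreal_le_iff less_le_not_le linorder_le_less_linear)
  have bK: "b \<le> K" unfolding b_def
    using integral_mono[OF Yint, of "\<lambda>_. K"] Ybd by (simp add: prob_space)
  define l where "l = min (1/K) ((b - a) / (2 * K^2))"
  have l0: "0 < l" using ab Kpos by (simp add: l_def)
  have l1: "l \<le> 1/K" and l2: "l \<le> (b - a) / (2 * K^2)" by (auto simp: l_def)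
  have lK: "l * K \<le> 1" using l1 Kpos by (simp add: field_simps)
  define q where "q = 1 - l * (b - a) / 2"
  have q1: "q < 1" using l0 ab by (simp add: q_def)
  have "l * (b - a) \<le> l * K" using bK a0 l0 by (intro mult_left_mono) auto
  then have q0: "0 < q" using lK by (simp add: q_def)
  have l2K: "l^2 * K^2 \<le> l * (b - a) / 2"
  proof -
    have "l * K^2 \<le> (b - a) / 2" using l2 Kpos by (simp add: field_simps)
    then have "l * (l * K^2) \<le> l * ((b - a) / 2)" using l0 by (intro mult_left_mono) auto
    then show ?thesis by (simp add: power2_eq_square algebra_simps)
  qed
  have "ennreal (exp (l * \<rho> * real k)) * (\<integral>\<^sup>+\<omega>. ennreal (exp (- l * X k \<omega>)) \<partial>M)
      = (\<integral>\<^sup>+\<omega>. ennreal (exp (l * a - l * X k \<omega>)) \<partial>M)"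
  proof -
    have "ennreal (exp (l * \<rho> * real k)) * (\<integral>\<^sup>+\<omega>. ennreal (exp (- l * X k \<omega>)) \<partial>M)
       = (\<integral>\<^sup>+\<omega>. ennreal (exp (l * \<rho> * real k)) * ennreal (exp (- l * X k \<omega>)) \<partial>M)"
      by (rule nn_integral_cmult[symmetric]) (use meas[OF k] in measurable)
    also have "\<dots> = (\<integral>\<^sup>+\<omega>. ennreal (exp (l * a - l * X k \<omega>)) \<partial>M)"
      by (auto intro!: nn_integral_cong simp: a_def ennreal_mult[symmetric] exp_add[symmetric] mult.assoc)
    finally show ?thesis .
  qed
  also have "\<dots> \<le> (\<integral>\<^sup>+\<omega>. ennreal (1 - l * (Y \<omega> - a) + l^2 * K^2) \<partial>M)"
  proof (intro nn_integral_mono ennreal_leI)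
    fix \<omega> assume w: "\<omega> \<in> space M"
    define z where "z = l * (Y \<omega> - a)"
    have "l * a \<le> 1" using lK Kpos a0 l0 by (smt (verit) mult_left_mono)
    moreover have "0 \<le> l * Y \<omega>" using Ybd[OF w] l0 by simp
    ultimately have z1: "-1 \<le> z" by (simp add: z_def algebra_simps)
    have "\<bar>Y \<omega> - a\<bar> \<le> K" using Ybd[OF w] a0 Kpos by auto
    then have "\<bar>z\<bar> \<le> l * K" using l0 by (simp add: z_def abs_mult)
    then have "z^2 \<le> (l * K)^2" by (metis abs_ge_zero abs_le_square_iff abs_mult_self_eq abs_power2 power2_abs power_mono)
    then have zz: "z^2 \<le> l^2 * K^2" by (simp add: power_mult_distrib)
    have "exp (l * a - l * X k \<omega>) \<le> exp (- z)"
      using Ybd[OF w] l0 by (simp add: z_def algebra_simps)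
    also have "\<dots> \<le> 1 - z + z^2" by (rule exp_neg_le_quad[OF z1])
    finally show "exp (l * a - l * X k \<omega>) \<le> 1 - l * (Y \<omega> - a) + l^2 * K^2"
      using zz by (simp add: z_def)
  qed
  also have "\<dots> = ennreal (\<integral>\<omega>. (1 - l * (Y \<omega> - a) + l^2 * K^2) \<partial>M)"
  proof (rule nn_integral_eq_integral)
    show "integrable M (\<lambda>\<omega>. 1 - l * (Y \<omega> - a) + l^2 * K^2)" using Yint by auto
    show "AE \<omega> in M. 0 \<le> 1 - l * (Y \<omega> - a) + l^2 * K^2"
    proof (rule AE_I2)
      fix \<omega> assume w: "\<omega> \<in> space M"
      have "l * (Y \<omega> - a) \<le> l * K" using Ybd[OF w] a0 l0 by (intro mult_left_mono) auto
      then show "0 \<le> 1 - l * (Y \<omega> - a) + l^2 * K^2" using lK by (smt (verit) zero_le_power2 mult_nonneg_nonneg)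
    qed
  qed
  also have "(\<integral>\<omega>. (1 - l * (Y \<omega> - a) + l^2 * K^2) \<partial>M) = 1 - l * (b - a) + l^2 * K^2"
    using Yint by (simp add: b_def prob_space algebra_simps)
  also have "ennreal (1 - l * (b - a) + l^2 * K^2) \<le> ennreal q"
    using l2K by (intro ennreal_leI) (simp add: q_def)
  finally show ?thesis using k l0 q0 q1 by blast
qed



lemma G_le1:
  fixes M :: "'a measure" and X :: "nat \<Rightarrow> 'a \<Rightarrow> real"
  assumes M: "prob_space M"
    and nn: "\<And>n \<omega>. 1 \<le> n \<Longrightarrow> \<omega> \<in> space M \<Longrightarrow> 0 \<le> X n \<omega>"
    and n: "1 \<le> n" and l: "0 \<le> l"
  shows "(\<integral>\<^sup>+\<omega>. ennreal (exp (- l * X n \<omega>)) \<partial>M) \<le> 1"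
proof -
  interpret prob_space M by fact
  have "(\<integral>\<^sup>+\<omega>. ennreal (exp (- l * X n \<omega>)) \<partial>M) \<le> (\<integral>\<^sup>+\<omega>. 1 \<partial>M)"
    using nn[OF n] l by (intro nn_integral_mono) (auto simp: mult_nonneg_nonneg)
  also have "\<dots> = 1" by (simp add: emeasure_space_1)
  finally show ?thesis .
qed

lemma G_pow:
  fixes M :: "'a measure" and X :: "nat \<Rightarrow> 'a \<Rightarrow> real"
  assumes M: "prob_space M" and meas: "\<And>n. 1 \<le> n \<Longrightarrow> X n \<in> borel_measurable M"
    and ss: "stoch_superadditive M X" and k: "1 \<le> k" and l: "l > 0"
  shows "1 \<le> d \<Longrightarrow> (\<integral>\<^sup>+\<omega>. ennreal (exp (- l * X (d * k) \<omega>)) \<partial>M) \<le> (\<integral>\<^sup>+\<omega>. ennreal (exp (- l * X k \<omega>)) \<partial>M) ^ d"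
proof (induction d rule: dec_induct)
  case base then show ?case by simp
next
  case (step d)
  have "(\<integral>\<^sup>+\<omega>. ennreal (exp (- l * X (Suc d * k) \<omega>)) \<partial>M) = (\<integral>\<^sup>+\<omega>. ennreal (exp (- l * X (d * k + k) \<omega>)) \<partial>M)"
    by (simp add: add.commute)
  also have "\<dots> \<le> (\<integral>\<^sup>+\<omega>. ennreal (exp (- l * X (d * k) \<omega>)) \<partial>M) * (\<integral>\<^sup>+\<omega>. ennreal (exp (- l * X k \<omega>)) \<partial>M)"
    by (rule submult[OF M meas ss _ k l]) (use step k in auto)
  also have "\<dots> \<le> (\<integral>\<^sup>+\<omega>. ennreal (exp (- l * X k \<omega>)) \<partial>M) ^ d * (\<integral>\<^sup>+\<omega>. ennreal (exp (- l * X k \<omega>)) \<partial>M)"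
    by (intro mult_right_mono step.IH) auto
  finally show ?case by (simp add: mult.commute)
qed

lemma G_div:
  fixes M :: "'a measure" and X :: "nat \<Rightarrow> 'a \<Rightarrow> real"
  assumes M: "prob_space M" and meas: "\<And>n. 1 \<le> n \<Longrightarrow> X n \<in> borel_measurable M"
    and nn: "\<And>n \<omega>. 1 \<le> n \<Longrightarrow> \<omega> \<in> space M \<Longrightarrow> 0 \<le> X n \<omega>"
    and ss: "stoch_superadditive M X" and k: "1 \<le> k" and l: "l > 0" and N: "1 \<le> N"
  shows "(\<integral>\<^sup>+\<omega>. ennreal (exp (- l * X N \<omega>)) \<partial>M) \<le> (\<integral>\<^sup>+\<omega>. ennreal (exp (- l * X k \<omega>)) \<partial>M) ^ (N div k)"
proof (cases "N div k = 0")
  case True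
  then show ?thesis using G_le1[of M X N l, OF M nn N] l by simp
next
  case False
  define d where "d = N div k"
  define r where "r = N mod k"
  have d1: "1 \<le> d" using False by (simp add: d_def)
  have Ndr: "N = d * k + r" by (simp add: d_def r_def)
  have "(\<integral>\<^sup>+\<omega>. ennreal (exp (- l * X N \<omega>)) \<partial>M) \<le> (\<integral>\<^sup>+\<omega>. ennreal (exp (- l * X (d * k) \<omega>)) \<partial>M)"
  proof (cases "r = 0")
    case True then show ?thesis using Ndr by simp
  next
    case False
    have "(\<integral>\<^sup>+\<omega>. ennreal (exp (- l * X N \<omega>)) \<partial>M) \<le> (\<integral>\<^sup>+\<omega>. ennreal (exp (- l * X (d * k) \<omega>)) \<partial>M) * (\<integral>\<^sup>+\<omega>. ennreal (exp (- l * X r \<omega>)) \<partial>M)"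
      unfolding Ndr by (rule submult[OF M meas ss _ _ l]) (use d1 k False in auto)
    also have "\<dots> \<le> (\<integral>\<^sup>+\<omega>. ennreal (exp (- l * X (d * k) \<omega>)) \<partial>M) * 1"
      by (intro mult_left_mono G_le1[of M X r l, OF M nn]) (use False l in auto)
    finally show ?thesis by simp
  qed
  also have "\<dots> \<le> (\<integral>\<^sup>+\<omega>. ennreal (exp (- l * X k \<omega>)) \<partial>M) ^ d"
    by (rule G_pow[OF M meas ss k l d1])
  finally show ?thesis by (simp add: d_def)
qed

lemma chernoff:
  fixes M :: "'a measure" and X :: "nat \<Rightarrow> 'a \<Rightarrow> real"
  assumes M: "prob_space M" and meas: "X N \<in> borel_measurable M" and l: "0 \<le> l"
  shows "emeasure M {\<omega> \<in> space M. X N \<omega> \<le> t} \<le> ennreal (exp (l * t)) * (\<integral>\<^sup>+\<omega>. ennreal (exp (- l * X N \<omega>)) \<partial>M)"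
proof -
  have "emeasure M {\<omega> \<in> space M. X N \<omega> \<le> t} = (\<integral>\<^sup>+\<omega>. indicator {\<omega> \<in> space M. X N \<omega> \<le> t} \<omega> \<partial>M)"
    using meas by (simp add: nn_integral_indicator)
  also have "\<dots> \<le> (\<integral>\<^sup>+\<omega>. ennreal (exp (l * t)) * ennreal (exp (- l * X N \<omega>)) \<partial>M)"
  proof (intro nn_integral_mono)
    fix \<omega> assume "\<omega> \<in> space M"
    show "indicator {\<omega> \<in> space M. X N \<omega> \<le> t} \<omega> \<le> ennreal (exp (l * t)) * ennreal (exp (- l * X N \<omega>))"
    proof (cases "X N \<omega> \<le> t")
      case True
      then have "l * X N \<omega> \<le> l * t" using l by (intro mult_left_mono) auto
      then have "1 \<le> exp (l * t) * exp (- l * X N \<omega>)" by (simp add: exp_add[symmetric])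
      then show ?thesis by (simp add: indicator_def ennreal_mult[symmetric])
    qed (simp add: indicator_def)
  qed
  also have "\<dots> = ennreal (exp (l * t)) * (\<integral>\<^sup>+\<omega>. ennreal (exp (- l * X N \<omega>)) \<partial>M)"
    by (rule nn_integral_cmult) (use meas in measurable)
  finally show ?thesis .
qed

lemma tail_absorb:
  fixes f :: "nat \<Rightarrow> real"
  assumes "\<And>N. 1 \<le> N \<Longrightarrow> f N \<le> C * exp (- c0 * real N)" and C: "0 < C" and c0: "0 < c0"
  shows "\<exists>c>0. \<exists>N. \<forall>n\<ge>N. f n \<le> exp (- c * real n)"
proof (intro exI[of _ "c0/2"] conjI exI[of _ "max 1 (nat \<lceil>2 * ln C / c0\<rceil>)"] allI impI)
  show "0 < c0 / 2" using c0 by simp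
  fix n assume n: "max 1 (nat \<lceil>2 * ln C / c0\<rceil>) \<le> n"
  then have "2 * ln C / c0 \<le> real n" by linarith
  then have "ln C \<le> c0 / 2 * real n" using c0 by (simp add: field_simps)
  then have "C * exp (- c0 * real n) \<le> exp (- (c0 / 2) * real n)"
  proof -
    have "C * exp (- c0 * real n) = exp (ln C - c0 * real n)" using C by (simp add: exp_diff exp_minus field_simps)
    also have "\<dots> \<le> exp (- (c0 / 2) * real n)" using \<open>ln C \<le> c0 / 2 * real n\<close> by simp
    finally show ?thesis .
  qed
  with assms(1)[of n] n show "f n \<le> exp (- (c0 / 2) * real n)" by simp
qed



lemma lower_tail:
  fixes M :: "'a measure" and X :: "nat \<Rightarrow> 'a \<Rightarrow> real"
  assumes M: "prob_space M"
    and meas: "\<And>n. 1 \<le> n \<Longrightarrow> X n \<in> borel_measurable M"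
    and nn: "\<And>n \<omega>. 1 \<le> n \<Longrightarrow> \<omega> \<in> space M \<Longrightarrow> 0 \<le> X n \<omega>"
    and ss: "stoch_superadditive M X"
    and rho: "ereal \<rho> < enn2ereal (rho_star M X)"
  shows "\<exists>c>0. \<exists>N. \<forall>n\<ge>N. measure M {\<omega> \<in> space M. X n \<omega> / real n \<le> \<rho>} \<le> exp (- c * real n)"
proof (cases "\<rho> < 0")
  case True
  show ?thesis
  proof (intro exI[of _ 1] conjI exI[of _ 1] allI impI)
    fix n :: nat assume n: "1 \<le> n"
    have "{\<omega> \<in> space M. X n \<omega> / real n \<le> \<rho>} = {}"
      using nn[OF n] True n by (auto simp: not_le) (smt (verit) divide_nonneg_nonneg of_nat_0_le_iff)
    then have "measure M {\<omega> \<in> space M. X n \<omega> / real n \<le> \<rho>} = 0" by (metis measure_empty)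
    then show "measure M {\<omega> \<in> space M. X n \<omega> / real n \<le> \<rho>} \<le> exp (- 1 * real n)" by simp
  qed simp
next
  case False
  then have r0: "0 \<le> \<rho>" by simp
  interpret prob_space M by fact
  have "ennreal \<rho> < rho_star M X"
    using rho r0 by (simp add: less_ennreal.rep_eq enn2ereal_ennreal)
  from exists_good_lambda[OF M meas nn r0 this] obtain k l q where
    k: "1 \<le> k" and l: "0 < l" and q: "0 < q" "q < 1" and
    kq: "ennreal (exp (l * \<rho> * real k)) * (\<integral>\<^sup>+\<omega>. ennreal (exp (- l * X k \<omega>)) \<partial>M) \<le> ennreal q"
    by blast
  define G where "G = (\<integral>\<^sup>+\<omega>. ennreal (exp (- l * X k \<omega>)) \<partial>M)"
  define C where "C = exp (l * \<rho> * real k - ln q)"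
  define c0 where "c0 = - ln q / real k"
  have c0: "0 < c0" using q k by (simp add: c0_def divide_neg_pos)
  show ?thesis
  proof (rule tail_absorb[of "\<lambda>n. measure M {\<omega> \<in> space M. X n \<omega> / real n \<le> \<rho>}" C c0])
    show "0 < C" by (simp add: C_def)
    show "0 < c0" by fact
    fix N :: nat assume N: "1 \<le> N"
    define d where "d = N div k"
    have Nlt: "real N < real k * (real d + 1)"
    proof -
      have "N mod k < k" using k by simp
      moreover have "N = d * k + N mod k" by (simp add: d_def)
      ultimately have "N < k * (d + 1)" by (simp add: algebra_simps)
      then show ?thesis by (metis of_nat_1 of_nat_add of_nat_less_iff of_nat_mult)
    qed
    have set_eq: "{\<omega> \<in> space M. X N \<omega> / real N \<le> \<rho>} = {\<omega> \<in> space M. X N \<omega> \<le> \<rho> * real N}"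
      using N by (auto simp: divide_le_eq)
    have "emeasure M {\<omega> \<in> space M. X N \<omega> \<le> \<rho> * real N}
        \<le> ennreal (exp (l * (\<rho> * real N))) * (\<integral>\<^sup>+\<omega>. ennreal (exp (- l * X N \<omega>)) \<partial>M)"
      by (rule chernoff[of M X N l, OF M meas[OF N]]) (use l in simp)
    also have "\<dots> \<le> ennreal (exp (l * (\<rho> * real N))) * G ^ d"
      unfolding G_def d_def by (intro mult_left_mono G_div[OF M meas nn ss k l N]) auto
    also have "\<dots> \<le> ennreal (exp (l * \<rho> * real k) * exp (l * \<rho> * real k) ^ d) * G ^ d"
    proof (intro mult_right_mono ennreal_leI)
      have "l * (\<rho> * real N) \<le> l * (\<rho> * (real k * (real d + 1)))"
        using Nlt l r0 by (intro mult_left_mono) auto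
      then show "exp (l * (\<rho> * real N)) \<le> exp (l * \<rho> * real k) * exp (l * \<rho> * real k) ^ d"
      proof -
        have e1: "exp (l * \<rho> * real k) ^ d = exp (real d * (l * \<rho> * real k))" by (rule exp_of_nat_mult[symmetric])
        have e2: "exp (l * \<rho> * real k) * exp (real d * (l * \<rho> * real k)) = exp (l * \<rho> * real k + real d * (l * \<rho> * real k))"
          by (rule exp_add[symmetric])
        have e3: "l * \<rho> * real k + real d * (l * \<rho> * real k) = l * (\<rho> * (real k * (real d + 1)))"
          by (simp add: algebra_simps)
        show ?thesis unfolding e1 e2 e3 using \<open>l * (\<rho> * real N) \<le> _\<close> by simp
      qed
    qed auto
    also have "\<dots> = ennreal (exp (l * \<rho> * real k)) * (ennreal (exp (l * \<rho> * real k)) * G) ^ d"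
      by (simp add: ennreal_mult ennreal_power power_mult_distrib mult.assoc)
    also have "\<dots> \<le> ennreal (exp (l * \<rho> * real k)) * ennreal q ^ d"
      using kq unfolding G_def by (intro mult_left_mono power_mono) auto
    also have "\<dots> = ennreal (exp (l * \<rho> * real k) * q ^ d)"
      using q by (simp add: ennreal_mult ennreal_power)
    finally have em: "emeasure M {\<omega> \<in> space M. X N \<omega> \<le> \<rho> * real N} \<le> ennreal (exp (l * \<rho> * real k) * q ^ d)" .
    have mle: "measure M {\<omega> \<in> space M. X N \<omega> \<le> \<rho> * real N} \<le> exp (l * \<rho> * real k) * q ^ d"
      using em q by (simp add: emeasure_eq_measure ennreal_le_iff)
    have "q ^ d = exp (ln q * real d)"
    proof -
      have "exp (real d * ln q) = exp (ln q) ^ d" by (rule exp_of_nat_mult)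
      then show ?thesis using q by (simp add: mult.commute)
    qed
    also have "\<dots> \<le> exp (ln q * (real N / real k - 1))"
    proof -
      have "real N / real k - 1 \<le> real d" using Nlt k by (simp add: field_simps)
      moreover have "ln q < 0" using q by simp
      ultimately show ?thesis by (simp add: mult_left_mono_neg)
    qed
    finally have "exp (l * \<rho> * real k) * q ^ d \<le> exp (l * \<rho> * real k) * exp (ln q * (real N / real k - 1))"
      by simp
    also have "\<dots> = C * exp (- c0 * real N)"
    proof -
      have "exp (l * \<rho> * real k) * exp (ln q * (real N / real k - 1)) = exp (l * \<rho> * real k + ln q * (real N / real k - 1))"
        by (rule exp_add[symmetric])
      also have "l * \<rho> * real k + ln q * (real N / real k - 1) = (l * \<rho> * real k - ln q) + (- c0 * real N)"
        using k by (simp add: c0_def field_simps)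
      also have "exp \<dots> = C * exp (- c0 * real N)" unfolding C_def by (rule exp_add)
      finally show ?thesis .
    qed
    finally show "measure M {\<omega> \<in> space M. X N \<omega> / real N \<le> \<rho>} \<le> C * exp (- c0 * real N)"
      using mle set_eq by simp
  qed
qed



lemma lower_lim:
  fixes M :: "'a measure" and X :: "nat \<Rightarrow> 'a \<Rightarrow> real"
  assumes M: "prob_space M"
    and meas: "\<And>n. 1 \<le> n \<Longrightarrow> X n \<in> borel_measurable M"
    and nn: "\<And>n \<omega>. 1 \<le> n \<Longrightarrow> \<omega> \<in> space M \<Longrightarrow> 0 \<le> X n \<omega>"
    and ss: "stoch_superadditive M X"
    and rho: "ereal \<rho> < enn2ereal (rho_star M X)"
  shows "(\<lambda>n. measure M {\<omega> \<in> space M. X n \<omega> / real n \<le> \<rho>}) \<longlonglongrightarrow> 0"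
proof -
  obtain c N where c: "c > 0" and bd: "\<And>n. n \<ge> N \<Longrightarrow> measure M {\<omega> \<in> space M. X n \<omega> / real n \<le> \<rho>} \<le> exp (- c * real n)"
    using lower_tail[OF M meas nn ss rho] by blast
  have lim: "(\<lambda>n. exp (- c * real n)) \<longlonglongrightarrow> 0" using c by real_asymp
  show ?thesis
  proof (rule Lim_null_comparison[OF _ lim])
    show "\<forall>\<^sub>F n in sequentially. norm (measure M {\<omega> \<in> space M. X n \<omega> / real n \<le> \<rho>}) \<le> exp (- c * real n)"
      using bd by (auto simp: eventually_sequentially intro!: exI[of _ N])
  qed
qed

lemma upper_lim:
  fixes M :: "'a measure" and X :: "nat \<Rightarrow> 'a \<Rightarrow> real"
  assumes M: "prob_space M"
    and meas: "\<And>n. 1 \<le> n \<Longrightarrow> X n \<in> borel_measurable M"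
    and nn: "\<And>n \<omega>. 1 \<le> n \<Longrightarrow> \<omega> \<in> space M \<Longrightarrow> 0 \<le> X n \<omega>"
    and ss: "stoch_superadditive M X"
    and bb: "enn2ereal (rho_star M X) < ereal b"
  shows "(\<lambda>n. measure M {\<omega> \<in> space M. b \<le> X n \<omega> / real n}) \<longlonglongrightarrow> 0"
proof -
  interpret prob_space M by fact
  have ntop: "rho_star M X \<noteq> \<top>" using bb by auto
  define r where "r = enn2real (rho_star M X)"
  have rs: "rho_star M X = ennreal r" using ntop by (simp add: r_def ennreal_enn2real_if)
  have r0: "0 \<le> r" by (simp add: r_def)
  have rb: "r < b" using bb r0 by (simp add: rs enn2ereal_ennreal)
  have Zint: "integrable M (\<lambda>\<omega>. X n \<omega> / real n)" and EZ: "expectation (\<lambda>\<omega>. X n \<omega> / real n) \<le> r"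
    if n: "1 \<le> n" for n
  proof -
    have "(\<integral>\<^sup>+ \<omega>. ennreal (X n \<omega>) \<partial>M) / of_nat n \<le> rho_star M X"
      unfolding rho_star_def using n by (intro SUP_upper) auto
    then have "(\<integral>\<^sup>+ \<omega>. ennreal (X n \<omega>) \<partial>M) / of_nat n * of_nat n \<le> ennreal r * of_nat n"
      unfolding rs by (intro mult_right_mono) auto
    moreover have "(of_nat n :: ennreal) / of_nat n = 1"
      using n by (simp add: ennreal_of_nat_eq_real_of_nat divide_ennreal)
    ultimately have I: "(\<integral>\<^sup>+ \<omega>. ennreal (X n \<omega>) \<partial>M) \<le> ennreal (r * real n)"
      using r0 by (simp add: ennreal_divide_times ennreal_mult ennreal_of_nat_eq_real_of_nat)
    have Xint: "integrable M (X n)"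
      by (rule integrableI_nonneg) (use meas[OF n] nn[OF n] I in \<open>auto simp: top_unique intro: le_less_trans\<close>)
    then show "integrable M (\<lambda>\<omega>. X n \<omega> / real n)" by simp
    have "ennreal (expectation (X n)) = (\<integral>\<^sup>+ \<omega>. ennreal (X n \<omega>) \<partial>M)"
      by (rule nn_integral_eq_integral[OF Xint, symmetric]) (use nn[OF n] in auto)
    with I have "ennreal (expectation (X n)) \<le> ennreal (r * real n)" by simp
    then have "expectation (X n) \<le> r * real n"
      using r0 by (subst (asm) ennreal_le_iff) auto
    then show "expectation (\<lambda>\<omega>. X n \<omega> / real n) \<le> r"
      using n by (simp add: divide_le_eq)
  qed
  have key: "(b - \<rho>') * measure M {\<omega> \<in> space M. b \<le> X n \<omega> / real n}
      \<le> r - \<rho>' + \<rho>' * measure M {\<omega> \<in> space M. X n \<omega> / real n \<le> \<rho>'}"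
    if n: "1 \<le> n" and rb': "\<rho>' < b" for n \<rho>'
  proof -
    define A where "A = {\<omega> \<in> space M. b \<le> X n \<omega> / real n}"
    define B where "B = {\<omega> \<in> space M. X n \<omega> / real n \<le> \<rho>'}"
    have [measurable]: "X n \<in> borel_measurable M" using meas[OF n] .
    have As: "A \<in> sets M" and Bs: "B \<in> sets M" unfolding A_def B_def by measurable
    have pw: "\<rho>' + (b - \<rho>') * indicator A \<omega> - \<rho>' * indicator B \<omega> \<le> X n \<omega> / real n"
      if w: "\<omega> \<in> space M" for \<omega>
    proof -
      have z: "0 \<le> X n \<omega> / real n" using nn[OF n w] by simp
      show ?thesis
      proof (cases "\<omega> \<in> A")
        case True
        then have "\<omega> \<notin> B" using rb' by (auto simp: A_def B_def)
        then show ?thesis using True by (auto simp: A_def)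
      next
        case False
        then have lt: "X n \<omega> / real n < b" using w by (auto simp: A_def)
        show ?thesis
        proof (cases "\<omega> \<in> B")
          case True then show ?thesis using False z by simp
        next
          case nB: False
          then have "\<rho>' < X n \<omega> / real n" using w by (auto simp: B_def)
          then show ?thesis using False nB by simp
        qed
      qed
    qed
    have iA: "integrable M (indicator A :: 'a \<Rightarrow> real)" by (rule integrable_const_bound[where B=1]) (use As in auto)
    have iB: "integrable M (indicator B :: 'a \<Rightarrow> real)" by (rule integrable_const_bound[where B=1]) (use Bs in auto)
    have "(\<integral>\<omega>. \<rho>' + (b - \<rho>') * indicator A \<omega> - \<rho>' * indicator B \<omega> \<partial>M) \<le> expectation (\<lambda>\<omega>. X n \<omega> / real n)"
      by (intro integral_mono Zint[OF n] pw) (use iA iB in auto)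
    also have "\<dots> \<le> r" by (rule EZ[OF n])
    finally have "(\<integral>\<omega>. \<rho>' + (b - \<rho>') * indicator A \<omega> - \<rho>' * indicator B \<omega> \<partial>M) \<le> r" .
    moreover have "(\<integral>\<omega>. \<rho>' + (b - \<rho>') * indicator A \<omega> - \<rho>' * indicator B \<omega> \<partial>M)
        = \<rho>' + (b - \<rho>') * measure M A - \<rho>' * measure M B"
      using iA iB As Bs by (simp add: prob_space)
    ultimately show ?thesis by (simp add: A_def B_def algebra_simps)
  qed
  show ?thesis
  proof (rule order_tendstoI)
    fix a :: real assume "a < 0"
    then show "\<forall>\<^sub>F n in sequentially. a < measure M {\<omega> \<in> space M. b \<le> X n \<omega> / real n}"
      by (intro always_eventually allI) (meson less_le_trans measure_nonneg)
  next
    fix \<epsilon> :: real assume e: "0 < \<epsilon>"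
    define \<delta> where "\<delta> = \<epsilon> * (b - r) / 2"
    define \<rho>' where "\<rho>' = r - \<delta>"
    have d0: "0 < \<delta>" using e rb by (simp add: \<delta>_def)
    have "ereal \<rho>' < enn2ereal (rho_star M X)" using d0 r0 by (simp add: rs enn2ereal_ennreal \<rho>'_def)
    from lower_lim[OF M meas nn ss this]
    have sl: "(\<lambda>n. measure M {\<omega> \<in> space M. X n \<omega> / real n \<le> \<rho>'}) \<longlonglongrightarrow> 0" .
    define \<eta> where "\<eta> = \<epsilon> * (b - r) / (2 * (\<bar>\<rho>'\<bar> + 1))"
    have eta0: "0 < \<eta>" using e rb by (simp add: \<eta>_def)
    have ev: "\<forall>\<^sub>F n in sequentially. measure M {\<omega> \<in> space M. X n \<omega> / real n \<le> \<rho>'} < \<eta>"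
      using order_tendstoD(2)[OF sl eta0] .
    moreover have "\<forall>\<^sub>F n in sequentially. 1 \<le> n" by (rule eventually_ge_at_top)
    ultimately show "\<forall>\<^sub>F n in sequentially. measure M {\<omega> \<in> space M. b \<le> X n \<omega> / real n} < \<epsilon>"
    proof eventually_elim
      case (elim n)
      define p where "p = measure M {\<omega> \<in> space M. b \<le> X n \<omega> / real n}"
      define s where "s = measure M {\<omega> \<in> space M. X n \<omega> / real n \<le> \<rho>'}"
      have s0: "0 \<le> s" by (simp add: s_def)
      have p0: "0 \<le> p" by (simp add: p_def)
      have k: "(b - \<rho>') * p \<le> \<delta> + \<rho>' * s"
        using key[OF elim(2), of \<rho>'] rb d0 by (simp add: p_def s_def \<rho>'_def)
      have "\<rho>' * s \<le> \<bar>\<rho>'\<bar> * \<eta>"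
      proof -
        have "\<rho>' * s \<le> \<bar>\<rho>'\<bar> * s" using s0 by (intro mult_right_mono) auto
        also have "\<dots> \<le> \<bar>\<rho>'\<bar> * \<eta>" using elim(1) by (intro mult_left_mono) (auto simp: s_def)
        finally show ?thesis .
      qed
      moreover have "\<bar>\<rho>'\<bar> * \<eta> < \<epsilon> * (b - r) / 2"
      proof -
        have "\<bar>\<rho>'\<bar> * \<eta> = (\<epsilon> * (b - r) / 2) * (\<bar>\<rho>'\<bar> / (\<bar>\<rho>'\<bar> + 1))"
          by (simp add: \<eta>_def field_simps)
        also have "\<dots> < (\<epsilon> * (b - r) / 2) * 1"
          using e rb by (intro mult_strict_left_mono) auto
        finally show ?thesis by simp
      qed
      ultimately have "(b - \<rho>') * p < \<epsilon> * (b - r)" using k by (simp add: \<delta>_def)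
      moreover have "(b - r) * p \<le> (b - \<rho>') * p" using p0 d0 by (intro mult_right_mono) (auto simp: \<rho>'_def)
      ultimately have "(b - r) * p < (b - r) * \<epsilon>" by (simp add: mult.commute)
      then show ?case using rb by (simp add: p_def)
    qed
  qed
qed


theorem lemma7:
  fixes M :: "'a measure" and X :: "nat \<Rightarrow> 'a \<Rightarrow> real"
  assumes "prob_space M"
    and "\<And>n. 1 \<le> n \<Longrightarrow> X n \<in> borel_measurable M"
    and "\<And>n \<omega>. 1 \<le> n \<Longrightarrow> \<omega> \<in> space M \<Longrightarrow> 0 \<le> X n \<omega>"
    and "stoch_superadditive M X"
  shows "(\<forall>a::real. ereal a < enn2ereal (rho_star M X) \<longrightarrow>
            (\<lambda>n. measure M {\<omega> \<in> space M. X n \<omega> / real n \<le> a}) \<longlonglongrightarrow> 0)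
       \<and> (\<forall>b::real. enn2ereal (rho_star M X) < ereal b \<longrightarrow>
            (\<lambda>n. measure M {\<omega> \<in> space M. b \<le> X n \<omega> / real n}) \<longlonglongrightarrow> 0)
       \<and> (\<forall>\<rho>::real. ereal \<rho> < enn2ereal (rho_star M X) \<longrightarrow>
            (\<exists>c>0. \<exists>N. \<forall>n\<ge>N. measure M {\<omega> \<in> space M. X n \<omega> / real n \<le> \<rho>}
                               \<le> exp (- c * real n)))"
  using lower_lim[OF assms] upper_lim[OF assms] lower_tail[OF assms] by blast

end
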